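(* Let $\mathcal{A}$ and $\mathcal{B}$ be unital algebras over a field of characteristic zero, let $\mathcal{M}$ be an $(\mathcal{A},\mathcal{B})$-bimodule which is faithful as a left $\mathcal{A}$-module and as a right $\mathcal{B}$-module, and let $\mathcal{T}=Tri(\mathcal{A},\mathcal{M},\mathcal{B})$ be the associated (unital) triangular algebra, with identity $\mathbf{1}$ and center $Z(\mathcal{T})$. Let $n>1$ be an integer, let $\gamma$ be an invertible element of $Z(\mathcal{T})$, and let $\Psi,\Omega:\mathcal{T}\to\mathcal{T}$ be additive mappings satisfying \[ \Psi(X^n)=\gamma X\,\Omega(X^{n-1})=\gamma\,\Omega(X^{n-1})X\quad\text{for all } X\in\mathcal{T}. \] If $\Omega(\mathbf{1})\in Z(\mathcal{T})$, then $\Psi$ and $\Omega$ are two-sided centralizers on $\mathcal{T}$ and $\Psi=\gamma\Omega$.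
   Context: For algebras $\mathcal{A},\mathcal{B}$ and an $(\mathcal{A},\mathcal{B})$-bimodule $\mathcal{M}$, the triangular algebra $Tri(\mathcal{A},\mathcal{M},\mathcal{B})$ is the set of matrices $\begin{bmatrix} a & m\\ 0 & b\end{bmatrix}$ with $a\in\mathcal{A}$, $m\in\mathcal{M}$, $b\in\mathcal{B}$, under the usual matrix operations; it is unital when $\mathcal{A}$ and $\mathcal{B}$ are. Its center is $Z(\mathcal{T})=\{a\oplus b: a\in Z(\mathcal{A}),\ b\in Z(\mathcal{B}),\ am=mb \text{ for all } m\in\mathcal{M}\}$. An additive map $T:\mathcal{T}\to\mathcal{T}$ is a two-sided centralizer if $T(XY)=T(X)Y=XT(Y)$ for all $X,Y\in\mathcal{T}$. *)

theory Defs
  imports Complex_Main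
begin

definition unital_algebra :: "('k::field \<Rightarrow> 'a::ring_1 \<Rightarrow> 'a) \<Rightarrow> bool" where
  "unital_algebra s \<longleftrightarrow> module s \<and>
     (\<forall>c x y. s c (x * y) = s c x * y \<and> s c (x * y) = x * s c y)"

definition bimodule ::
  "('k::field \<Rightarrow> 'a::ring_1 \<Rightarrow> 'a) \<Rightarrow> ('k \<Rightarrow> 'b::ring_1 \<Rightarrow> 'b) \<Rightarrow> ('k \<Rightarrow> 'm::ab_group_add \<Rightarrow> 'm)
   \<Rightarrow> ('a \<Rightarrow> 'm \<Rightarrow> 'm) \<Rightarrow> ('m \<Rightarrow> 'b \<Rightarrow> 'm) \<Rightarrow> bool" where
  "bimodule sA sB sM lA rB \<longleftrightarrow> module sM \<and>
     (\<forall>a a' m. lA (a * a') m = lA a (lA a' m)) \<and> (\<forall>m. lA 1 m = m) \<and>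
     (\<forall>a a' m. lA (a + a') m = lA a m + lA a' m) \<and>
     (\<forall>a m m'. lA a (m + m') = lA a m + lA a m') \<and>
     (\<forall>b b' m. rB m (b * b') = rB (rB m b) b') \<and> (\<forall>m. rB m 1 = m) \<and>
     (\<forall>b b' m. rB m (b + b') = rB m b + rB m b') \<and>
     (\<forall>b m m'. rB (m + m') b = rB m b + rB m' b) \<and>
     (\<forall>a m b. lA a (rB m b) = rB (lA a m) b) \<and>
     (\<forall>c a m. sM c (lA a m) = lA (sA c a) m \<and> sM c (lA a m) = lA a (sM c m)) \<and>
     (\<forall>c m b. sM c (rB m b) = rB m (sB c b) \<and> sM c (rB m b) = rB (sM c m) b)"

definition faithful_left :: "('a::ring_1 \<Rightarrow> 'm::ab_group_add \<Rightarrow> 'm) \<Rightarrow> bool" where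
  "faithful_left lA \<longleftrightarrow> (\<forall>a. (\<forall>m. lA a m = 0) \<longrightarrow> a = 0)"

definition faithful_right :: "('m::ab_group_add \<Rightarrow> 'b::ring_1 \<Rightarrow> 'm) \<Rightarrow> bool" where
  "faithful_right rB \<longleftrightarrow> (\<forall>b. (\<forall>m. rB m b = 0) \<longrightarrow> b = 0)"

text \<open>The triangular algebra Tri(A,M,B): the matrix [a m; 0 b] is the triple (a,m,b).\<close>
type_synonym ('a,'m,'b) tri = "'a \<times> 'm \<times> 'b"

fun tadd :: "('a::ring_1,'m::ab_group_add,'b::ring_1) tri \<Rightarrow> ('a,'m,'b) tri \<Rightarrow> ('a,'m,'b) tri" where
  "tadd (a,m,b) (a',m',b') = (a + a', m + m', b + b')"

fun tmul :: "('a::ring_1 \<Rightarrow> 'm::ab_group_add \<Rightarrow> 'm) \<Rightarrow> ('m \<Rightarrow> 'b::ring_1 \<Rightarrow> 'm)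
   \<Rightarrow> ('a,'m,'b) tri \<Rightarrow> ('a,'m,'b) tri \<Rightarrow> ('a,'m,'b) tri" where
  "tmul lA rB (a,m,b) (a',m',b') = (a * a', lA a m' + rB m b', b * b')"

definition tone :: "('a::ring_1,'m::ab_group_add,'b::ring_1) tri" where
  "tone = (1, 0, 1)"

fun tpow :: "('a::ring_1 \<Rightarrow> 'm::ab_group_add \<Rightarrow> 'm) \<Rightarrow> ('m \<Rightarrow> 'b::ring_1 \<Rightarrow> 'm)
   \<Rightarrow> ('a,'m,'b) tri \<Rightarrow> nat \<Rightarrow> ('a,'m,'b) tri" where
  "tpow lA rB X 0 = tone"
| "tpow lA rB X (Suc k) = tmul lA rB X (tpow lA rB X k)"

definition tcenter :: "('a::ring_1 \<Rightarrow> 'm::ab_group_add \<Rightarrow> 'm) \<Rightarrow> ('m \<Rightarrow> 'b::ring_1 \<Rightarrow> 'm)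
   \<Rightarrow> ('a,'m,'b) tri set" where
  "tcenter lA rB = {Z. \<forall>X. tmul lA rB Z X = tmul lA rB X Z}"

definition tadditive :: "(('a::ring_1,'m::ab_group_add,'b::ring_1) tri \<Rightarrow> ('a,'m,'b) tri) \<Rightarrow> bool" where
  "tadditive f \<longleftrightarrow> (\<forall>X Y. f (tadd X Y) = tadd (f X) (f Y))"

definition two_sided_centralizer :: "('a::ring_1 \<Rightarrow> 'm::ab_group_add \<Rightarrow> 'm) \<Rightarrow> ('m \<Rightarrow> 'b::ring_1 \<Rightarrow> 'm)
   \<Rightarrow> (('a,'m,'b) tri \<Rightarrow> ('a,'m,'b) tri) \<Rightarrow> bool" where
  "two_sided_centralizer lA rB T \<longleftrightarrow> tadditive T \<and>
     (\<forall>X Y. T (tmul lA rB X Y) = tmul lA rB (T X) Y \<and> T (tmul lA rB X Y) = tmul lA rB X (T Y))"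

end

theory Submission imports Defs "HOL-Library.Product_Plus" "HOL-Computational_Algebra.Polynomial" begin

lemma extract_coeff:
  fixes s :: "'k::field_char_0 \<Rightarrow> 'g::ab_group_add \<Rightarrow> 'g"
  assumes ms: "module s" and h: "\<And>k::nat. (\<Sum>i\<le>N. s (of_nat k ^ i) (c i)) = 0" and j: "j \<le> N"
  shows "c j = 0"
proof (rule ccontr)
  assume cj: "c j \<noteq> 0"
  interpret vs: vector_space_pair s "(*) :: 'k \<Rightarrow> 'k \<Rightarrow> 'k"
    using ms by (simp add: vector_space_pair_def module_iff_vector_space[symmetric] module_def algebra_simps)
  have ind: "vs.vs1.independent {c j}"
    using cj by (simp add: vs.vs1.independent_insert)
  define f where "f = vs.construct {c j} (\<lambda>_. 1)"
  have lin: "Vector_Spaces.linear s (*) f" unfolding f_def by (rule vs.linear_construct[OF ind])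
  interpret lf: Vector_Spaces.linear s "(*) :: 'k \<Rightarrow> 'k \<Rightarrow> 'k" f by (rule lin)
  have fc: "f (c j) = 1" unfolding f_def by (rule vs.construct_basis[OF ind]) simp
  define p where "p = (\<Sum>i\<le>N. monom (f (c i)) i)"
  have "poly p (of_nat k) = 0" for k :: nat
  proof -
    have "f (\<Sum>i\<le>N. s (of_nat k ^ i) (c i)) = 0" using h[of k] lf.zero by simp
    then show ?thesis unfolding p_def
      by (simp add: poly_sum poly_monom lf.sum lf.scale mult.commute)
  qed
  then have "{x. poly p x = 0} \<supseteq> range (of_nat :: nat \<Rightarrow> 'k)" by auto
  moreover have "infinite (range (of_nat :: nat \<Rightarrow> 'k))"
    using range_inj_infinite[of "of_nat :: nat \<Rightarrow> 'k"] by (simp add: inj_of_nat)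
  ultimately have "p = 0" using poly_roots_finite finite_subset by blast
  then have "coeff p j = 0" by simp
  then show False using coeff_sum_monom[OF j, of "\<lambda>i. f (c i)"] fc unfolding p_def by simp
qed

lemma extract_rev:
  fixes s :: "'k::field_char_0 \<Rightarrow> 'g::ab_group_add \<Rightarrow> 'g"
  assumes ms: "module s" and h: "\<And>k::nat. (\<Sum>i\<le>N. s (of_nat k ^ (N - i)) (c i)) = 0" and j: "j \<le> N"
  shows "c j = 0"
proof -
  have "(\<Sum>i\<le>N. s (of_nat k ^ i) (c (N - i))) = 0" for k :: nat
  proof -
    have "(\<Sum>i\<le>N. s (of_nat k ^ i) (c (N - i))) = (\<Sum>i\<le>N. s (of_nat k ^ (N - i)) (c i))"
      by (rule sum.reindex_bij_witness[where i="\<lambda>i. N - i" and j="\<lambda>i. N - i"]) auto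
    then show ?thesis using h[of k] by simp
  qed
  from extract_coeff[OF ms this, of "N - j"] j show ?thesis by simp
qed

lemma tadd_eq: "tadd X Y = X + Y"
  by (cases X; cases Y) auto

locale triset =
  fixes sA :: "'k::field_char_0 \<Rightarrow> 'a::ring_1 \<Rightarrow> 'a"
    and sB :: "'k \<Rightarrow> 'b::ring_1 \<Rightarrow> 'b"
    and sM :: "'k \<Rightarrow> 'm::ab_group_add \<Rightarrow> 'm"
    and lA :: "'a \<Rightarrow> 'm \<Rightarrow> 'm"
    and rB :: "'m \<Rightarrow> 'b \<Rightarrow> 'm"
  assumes uA: "unital_algebra sA" and uB: "unital_algebra sB"
    and bm: "bimodule sA sB sM lA rB"
begin

lemma mA: "module sA" using uA by (simp add: unital_algebra_def)
lemma mB: "module sB" using uB by (simp add: unital_algebra_def)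
lemma mM: "module sM" using bm by (simp add: bimodule_def)
lemma sA_mul: "sA c (x * y) = sA c x * y" "sA c (x * y) = x * sA c y" using uA unfolding unital_algebra_def by blast+
lemma sB_mul: "sB c (x * y) = sB c x * y" "sB c (x * y) = x * sB c y" using uB unfolding unital_algebra_def by blast+
lemma lA_mul: "lA (a * a') m = lA a (lA a' m)" using bm by (simp add: bimodule_def)
lemma lA_one: "lA 1 m = m" using bm by (simp add: bimodule_def)
lemma lA_addl: "lA (a + a') m = lA a m + lA a' m" using bm by (simp add: bimodule_def)
lemma lA_addr: "lA a (m + m') = lA a m + lA a m'" using bm by (simp add: bimodule_def)
lemma rB_mul: "rB m (b * b') = rB (rB m b) b'" using bm by (simp add: bimodule_def)
lemma rB_one: "rB m 1 = m" using bm by (simp add: bimodule_def)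
lemma rB_addr: "rB m (b + b') = rB m b + rB m b'" using bm by (simp add: bimodule_def)
lemma rB_addl: "rB (m + m') b = rB m b + rB m' b" using bm by (simp add: bimodule_def)
lemma lr: "lA a (rB m b) = rB (lA a m) b" using bm by (simp add: bimodule_def)
lemma sM_lA1: "sM c (lA a m) = lA (sA c a) m" using bm unfolding bimodule_def by metis
lemma sM_lA2: "sM c (lA a m) = lA a (sM c m)" using bm unfolding bimodule_def by metis
lemma sM_rB1: "sM c (rB m b) = rB m (sB c b)" using bm unfolding bimodule_def by metis
lemma sM_rB2: "sM c (rB m b) = rB (sM c m) b" using bm unfolding bimodule_def by metis

lemma lA_0l[simp]: "lA 0 m = 0" using lA_addl[of 0 0 m] by simp
lemma lA_0r[simp]: "lA a 0 = 0" using lA_addr[of a 0 0] by simp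
lemma rB_0l[simp]: "rB 0 b = 0" using rB_addl[of 0 0 b] by simp
lemma rB_0r[simp]: "rB m 0 = 0" using rB_addr[of m 0 0] by simp

abbreviation M where "M \<equiv> tmul lA rB"
abbreviation P where "P \<equiv> tpow lA rB"

definition sT :: "'k \<Rightarrow> ('a,'m,'b) tri \<Rightarrow> ('a,'m,'b) tri" where
  "sT c X = (sA c (fst X), sM c (fst (snd X)), sB c (snd (snd X)))"

lemma sT_simp[simp]: "sT c (a,m,b) = (sA c a, sM c m, sB c b)" by (simp add: sT_def)

lemma mT: "module sT"
proof -
  interpret A: module sA by (rule mA)
  interpret B: module sB by (rule mB)
  interpret MM: module sM by (rule mM)
  show ?thesis
    by unfold_locales (auto simp: sT_def A.scale_right_distrib B.scale_right_distrib MM.scale_right_distrib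
        A.scale_left_distrib B.scale_left_distrib MM.scale_left_distrib)
qed

lemma M_distR: "M X (Y + Z) = M X Y + M X Z"
  by (cases X; cases Y; cases Z) (simp add: algebra_simps lA_addr rB_addr)
lemma M_distL: "M (X + Y) Z = M X Z + M Y Z"
  by (cases X; cases Y; cases Z) (simp add: algebra_simps lA_addl rB_addl)
lemma M_0R[simp]: "M X 0 = 0" using M_distR[of X 0 0] by simp
lemma M_0L[simp]: "M 0 X = 0" using M_distL[of 0 0 X] by simp
lemma M_assoc: "M (M X Y) Z = M X (M Y Z)"
  by (cases X; cases Y; cases Z) (simp add: algebra_simps lA_addr rB_addl lA_mul rB_mul lr)
lemma M_oneL[simp]: "M tone X = X" by (cases X) (simp add: tone_def lA_one)
lemma M_oneR[simp]: "M X tone = X" by (cases X) (simp add: tone_def rB_one)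
lemma M_sL: "M (sT c X) Y = sT c (M X Y)"
proof -
  interpret MM: module sM by (rule mM)
  show ?thesis by (cases X; cases Y) (simp add: sA_mul(1)[symmetric] sB_mul(1)[symmetric] sM_lA1 sM_rB2 MM.scale_right_distrib)
qed
lemma M_sR: "M X (sT c Y) = sT c (M X Y)"
proof -
  interpret MM: module sM by (rule mM)
  show ?thesis by (cases X; cases Y) (simp add: sA_mul(2)[symmetric] sB_mul(2)[symmetric] sM_lA2 sM_rB1 MM.scale_right_distrib)
qed
lemma M_sumR: "M X (\<Sum>i\<in>A. f i) = (\<Sum>i\<in>A. M X (f i))"
  by (induct A rule: infinite_finite_induct) (auto simp: M_distR)
lemma M_sumL: "M (\<Sum>i\<in>A. f i) X = (\<Sum>i\<in>A. M (f i) X)"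
  by (induct A rule: infinite_finite_induct) (auto simp: M_distL)
lemma M_negR: "M X (- Y) = - M X Y" using M_distR[of X Y "-Y"] by (simp add: eq_neg_iff_add_eq_0 add.commute)
lemma M_negL: "M (- X) Y = - M X Y" using M_distL[of X "-X" Y] by (simp add: eq_neg_iff_add_eq_0 add.commute)
lemma M_diffR: "M X (Y - Z) = M X Y - M X Z" using M_distR[of X Y "-Z"] M_negR by simp
lemma M_diffL: "M (X - Y) Z = M X Z - M Y Z" using M_distL[of X "-Y" Z] M_negL by simp

lemmas T_scale_one = module.scale_one[OF mT]
lemmas T_scale_left_distrib = module.scale_left_distrib[OF mT]
lemmas T_scale_right_distrib = module.scale_right_distrib[OF mT]
lemmas T_scale_scale = module.scale_scale[OF mT]
lemmas T_scale_sum_right = module.scale_sum_right[OF mT]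
lemmas T_scale_zero_left = module.scale_zero_left[OF mT]
lemmas T_scale_zero_right = module.scale_zero_right[OF mT]
lemmas T_scale_right_diff_distrib = module.scale_right_diff_distrib[OF mT]
lemmas T_scale_left_diff_distrib = module.scale_left_diff_distrib[OF mT]
lemmas T_scale_minus_right = module.scale_minus_right[OF mT]
declare T_scale_one[simp] T_scale_zero_left[simp] T_scale_zero_right[simp] T_scale_scale[simp]


lemma binom: "P (X + sT c tone) j = (\<Sum>i\<le>j. sT (of_nat (j choose i) * c^(j-i)) (P X i))"
proof (induction j)
  case 0
  then show ?case by simp
next
  case (Suc j)
  define S where "S = (\<Sum>i\<le>j. sT (of_nat (j choose i) * c^(j-i)) (P X i))"
  have "P (X + sT c tone) (Suc j) = M X S + sT c S"
    using Suc by (simp add: S_def M_distL M_sL)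
  also have "M X S = (\<Sum>i\<le>j. sT (of_nat (j choose i) * c^(j-i)) (P X (Suc i)))"
    unfolding S_def by (simp add: M_sumR M_sR)
  also have "sT c S = (\<Sum>i\<le>j. sT (of_nat (j choose i) * c^(Suc j-i)) (P X i))"
    unfolding S_def by (simp add: T_scale_sum_right Suc_diff_le mult.left_commute)
  also have "\<dots> = (\<Sum>i\<le>Suc j. sT (of_nat (j choose i) * c^(Suc j-i)) (P X i))"
    by (simp add: binomial_eq_0)
  also have "\<dots> = sT (c^Suc j) (P X 0) + (\<Sum>i\<le>j. sT (of_nat (j choose Suc i) * c^(j-i)) (P X (Suc i)))"
    by (subst sum.atMost_Suc_shift) simp
  finally have 1: "P (X + sT c tone) (Suc j) = (\<Sum>i\<le>j. sT (of_nat (j choose i) * c^(j-i)) (P X (Suc i)))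
     + (sT (c^Suc j) (P X 0) + (\<Sum>i\<le>j. sT (of_nat (j choose Suc i) * c^(j-i)) (P X (Suc i))))" .
  have "(\<Sum>i\<le>Suc j. sT (of_nat (Suc j choose i) * c^(Suc j-i)) (P X i))
      = sT (c^Suc j) (P X 0) + (\<Sum>i\<le>j. sT (of_nat (Suc j choose Suc i) * c^(j-i)) (P X (Suc i)))"
    by (subst sum.atMost_Suc_shift) simp
  also have "(\<Sum>i\<le>j. sT (of_nat (Suc j choose Suc i) * c^(j-i)) (P X (Suc i)))
     = (\<Sum>i\<le>j. sT (of_nat (j choose i) * c^(j-i)) (P X (Suc i))) + (\<Sum>i\<le>j. sT (of_nat (j choose Suc i) * c^(j-i)) (P X (Suc i)))"
    by (simp add: sum.distrib[symmetric] T_scale_left_distrib[symmetric] distrib_right)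
  finally show ?case using 1 by (simp add: algebra_simps)
qed

lemma addF: "tadditive F \<Longrightarrow> F (X + Y) = F X + F Y"
  by (metis tadditive_def tadd_eq)
lemma addF0: "tadditive F \<Longrightarrow> F 0 = 0"
  using addF[of F 0 0] by simp
lemma addF_sum: "tadditive F \<Longrightarrow> F (\<Sum>i\<in>A. f i) = (\<Sum>i\<in>A. F (f i))"
  by (induct A rule: infinite_finite_induct) (auto simp: addF addF0)
lemma addF_nat: "tadditive F \<Longrightarrow> F (sT (of_nat k) X) = sT (of_nat k) (F X)"
  by (induct k) (auto simp: addF addF0 T_scale_left_distrib)
lemma addF_neg: "tadditive F \<Longrightarrow> F (- X) = - F X"
  using addF[of F X "-X"] addF0[of F] by (simp add: eq_neg_iff_add_eq_0 add.commute)
lemma addF_diff: "tadditive F \<Longrightarrow> F (X - Y) = F X - F Y"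
  using addF[of F X "-Y"] addF_neg[of F Y] by simp


lemma lin_sum: "(\<And>W1 W2. G (W1 + W2) = G W1 + G W2) \<Longrightarrow> G 0 = 0 \<Longrightarrow> G (\<Sum>i\<in>A. f i) = (\<Sum>i\<in>A. G (f i))"
  by (induct A rule: infinite_finite_induct) auto

lemma addF_natsc: "tadditive F \<Longrightarrow> F (sT (of_nat a * of_nat k ^ e) X) = sT (of_nat k ^ e) (sT (of_nat a) (F X))"
proof -
  assume F: "tadditive F"
  have "F (sT (of_nat a * of_nat k ^ e) X) = F (sT (of_nat (a * k ^ e)) X)" by simp
  also have "\<dots> = sT (of_nat (a * k ^ e)) (F X)" by (rule addF_nat[OF F])
  finally show ?thesis by (simp add: mult.commute)
qed

lemma coeffs:
  fixes Psi Om K :: "('a,'m,'b) tri \<Rightarrow> ('a,'m,'b) tri" and L :: "('a,'m,'b) tri \<Rightarrow> ('a,'m,'b) tri \<Rightarrow> ('a,'m,'b) tri"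
  assumes aPsi: "tadditive Psi" and aOm: "tadditive Om"
    and hyp: "\<And>X. Psi (P X (Suc m)) = L X (Om (P X m))"
    and Ladd: "\<And>X W1 W2. L X (W1 + W2) = L X W1 + L X W2" and L0: "\<And>X. L X 0 = 0"
    and Ls: "\<And>X c W. L X (sT c W) = sT c (L X W)"
    and Kadd: "\<And>W1 W2. K (W1 + W2) = K W1 + K W2" and K0: "K 0 = 0"
    and Ks: "\<And>c W. K (sT c W) = sT c (K W)"
    and Lsh: "\<And>X c W. L (X + sT c tone) W = L X W + sT c (K W)"
    and i: "i \<le> Suc m"
  shows "sT (of_nat (Suc m choose i)) (Psi (P X i)) =
     (case i of 0 \<Rightarrow> 0 | Suc j \<Rightarrow> sT (of_nat (m choose j)) (L X (Om (P X j))))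
      + sT (of_nat (m choose i)) (K (Om (P X i)))"
proof -
  define A where "A i = (case i of 0 \<Rightarrow> 0 | Suc j \<Rightarrow> sT (of_nat (m choose j)) (L X (Om (P X j))))" for i
  define c where "c i = sT (of_nat (Suc m choose i)) (Psi (P X i)) - A i - sT (of_nat (m choose i)) (K (Om (P X i)))" for i
  have "c i = 0"
  proof (rule extract_rev[OF mT _ i])
    fix k :: nat
    define Y where "Y = X + sT (of_nat k) tone"
    have lhs: "Psi (P Y (Suc m)) = (\<Sum>i\<le>Suc m. sT (of_nat k ^ (Suc m - i)) (sT (of_nat (Suc m choose i)) (Psi (P X i))))"
      unfolding Y_def binom addF_sum[OF aPsi] by (simp add: addF_natsc[OF aPsi])
    have W: "Om (P Y m) = (\<Sum>j\<le>m. sT (of_nat k ^ (m - j)) (sT (of_nat (m choose j)) (Om (P X j))))"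
      unfolding Y_def binom addF_sum[OF aOm] by (simp add: addF_natsc[OF aOm])
    have r1: "L X (Om (P Y m)) = (\<Sum>i\<le>Suc m. sT (of_nat k ^ (Suc m - i)) (A i))"
    proof -
      have "L X (Om (P Y m)) = (\<Sum>j\<le>m. sT (of_nat k ^ (m - j)) (A (Suc j)))"
        unfolding W A_def by (simp add: lin_sum[of "L X", OF Ladd L0] Ls)
      also have "\<dots> = (\<Sum>i\<le>Suc m. sT (of_nat k ^ (Suc m - i)) (A i))"
        by (subst sum.atMost_Suc_shift) (simp add: A_def)
      finally show ?thesis .
    qed
    have r2: "sT (of_nat k) (K (Om (P Y m))) = (\<Sum>i\<le>Suc m. sT (of_nat k ^ (Suc m - i)) (sT (of_nat (m choose i)) (K (Om (P X i)))))"
    proof -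
      have "sT (of_nat k) (K (Om (P Y m))) = (\<Sum>i\<le>m. sT (of_nat k ^ (Suc m - i)) (sT (of_nat (m choose i)) (K (Om (P X i)))))"
        unfolding W by (simp add: lin_sum[of K, OF Kadd K0] Ks T_scale_sum_right Suc_diff_le mult.assoc)
      also have "\<dots> = (\<Sum>i\<le>Suc m. sT (of_nat k ^ (Suc m - i)) (sT (of_nat (m choose i)) (K (Om (P X i)))))"
        by (simp add: binomial_eq_0)
      finally show ?thesis .
    qed
    have "Psi (P Y (Suc m)) = L X (Om (P Y m)) + sT (of_nat k) (K (Om (P Y m)))"
      using hyp[of Y] Lsh unfolding Y_def by simp
    then have "(\<Sum>i\<le>Suc m. sT (of_nat k ^ (Suc m - i)) (sT (of_nat (Suc m choose i)) (Psi (P X i))))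
       = (\<Sum>i\<le>Suc m. sT (of_nat k ^ (Suc m - i)) (A i)) + (\<Sum>i\<le>Suc m. sT (of_nat k ^ (Suc m - i)) (sT (of_nat (m choose i)) (K (Om (P X i)))))"
      using lhs r1 r2 by simp
    then show "(\<Sum>i\<le>Suc m. sT (of_nat k ^ (Suc m - i)) (c i)) = 0"
      unfolding c_def by (simp add: T_scale_right_diff_distrib sum_subtractf)
  qed
  then show ?thesis unfolding c_def A_def by (simp add: algebra_simps)
qed

end

locale mainset = triset sA sB sM lA rB
  for sA :: "'k::field_char_0 \<Rightarrow> 'a::ring_1 \<Rightarrow> 'a"
    and sB :: "'k \<Rightarrow> 'b::ring_1 \<Rightarrow> 'b"
    and sM :: "'k \<Rightarrow> 'm::ab_group_add \<Rightarrow> 'm"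
    and lA :: "'a \<Rightarrow> 'm \<Rightarrow> 'm"
    and rB :: "'m \<Rightarrow> 'b \<Rightarrow> 'm" +
  fixes m :: nat and g :: "('a,'m,'b) tri" and Psi Om :: "('a,'m,'b) tri \<Rightarrow> ('a,'m,'b) tri"
  assumes fl: "faithful_left lA" and fr: "faithful_right rB"
    and m1: "m \<ge> 1"
    and gc: "g \<in> tcenter lA rB"
    and ginv: "\<exists>\<delta>. tmul lA rB g \<delta> = tone \<and> tmul lA rB \<delta> g = tone"
    and aPsi: "tadditive Psi" and aOm: "tadditive Om"
    and h1: "\<And>X. Psi (tpow lA rB X (Suc m)) = tmul lA rB g (tmul lA rB X (Om (tpow lA rB X m)))"
    and h2: "\<And>X. Psi (tpow lA rB X (Suc m)) = tmul lA rB g (tmul lA rB (Om (tpow lA rB X m)) X)"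
    and oc: "Om tone \<in> tcenter lA rB"
begin

abbreviation w where "w \<equiv> Om tone"

lemma gcomm: "M g X = M X g" using gc unfolding tcenter_def by blast
lemma wcomm: "M w X = M X w" using oc unfolding tcenter_def by blast

lemma tf: "sT (of_nat k) V = 0 \<Longrightarrow> k > 0 \<Longrightarrow> V = 0"
proof -
  assume "sT (of_nat k) V = 0" "k > 0"
  then have "sT (1 / of_nat k) (sT (of_nat k) V) = 0" by simp
  then show "V = 0" using \<open>k > 0\<close> by simp
qed

lemma tf2: "V + V = 0 \<Longrightarrow> (V::('a,'m,'b) tri) = 0"
  using tf[of 2 V] by (simp add: T_scale_left_distrib[of 1 1, simplified])

lemma gcancel: "M g V = 0 \<Longrightarrow> V = 0"
proof -
  assume h: "M g V = 0"
  obtain d where d: "M d g = tone" using ginv by blast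
  have "V = M (M d g) V" using d by simp
  also have "\<dots> = 0" by (simp add: M_assoc h)
  finally show ?thesis .
qed

lemma P1[simp]: "P X (Suc 0) = X" by simp
lemma P2: "P X 2 = M X X" by (simp add: numeral_2_eq_2)

lemma C1: "i \<le> Suc m \<Longrightarrow> sT (of_nat (Suc m choose i)) (Psi (P X i)) =
   (case i of 0 \<Rightarrow> 0 | Suc j \<Rightarrow> sT (of_nat (m choose j)) (M g (M X (Om (P X j)))))
   + sT (of_nat (m choose i)) (M g (Om (P X i)))"
  by (rule coeffs[where L="\<lambda>X W. M g (M X W)" and K="M g", OF aPsi aOm h1]) (auto simp: M_distR M_distL M_sR M_sL)

lemma C2: "i \<le> Suc m \<Longrightarrow> sT (of_nat (Suc m choose i)) (Psi (P X i)) =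
   (case i of 0 \<Rightarrow> 0 | Suc j \<Rightarrow> sT (of_nat (m choose j)) (M g (M (Om (P X j)) X)))
   + sT (of_nat (m choose i)) (M g (Om (P X i)))"
  by (rule coeffs[where L="\<lambda>X W. M g (M W X)" and K="M g", OF aPsi aOm h2]) (auto simp: M_distR M_distL M_sR M_sL)

lemma E1: "sT (of_nat (Suc m)) (Psi X) = M g (M X w) + sT (of_nat m) (M g (Om X))"
  using C1[of 1 X] by simp

lemma E2: "sT (of_nat (Suc m choose 2)) (Psi (M X X)) = sT (of_nat m) (M g (M X (Om X))) + sT (of_nat (m choose 2)) (M g (Om (M X X)))"
  using C1[of 2 X] m1 by (simp add: P2 numeral_2_eq_2)

lemma E2': "sT (of_nat (Suc m choose 2)) (Psi (M X X)) = sT (of_nat m) (M g (M (Om X) X)) + sT (of_nat (m choose 2)) (M g (Om (M X X)))"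
  using C2[of 2 X] m1 by (simp add: P2 numeral_2_eq_2)

lemma comm: "M X (Om X) = M (Om X) X"
proof -
  have "sT (of_nat m) (M g (M X (Om X))) = sT (of_nat m) (M g (M (Om X) X))"
    using E2[of X] E2'[of X] by simp
  then have "sT (of_nat m) (M g (M X (Om X) - M (Om X) X)) = 0"
    by (simp add: M_diffR T_scale_right_diff_distrib)
  then have "M g (M X (Om X) - M (Om X) X) = 0" using tf m1 by auto
  then show ?thesis using gcancel[of "M X (Om X) - M (Om X) X"] by simp
qed

lemma ch2: "of_nat (n choose 2) = (of_nat n * (of_nat n - 1) / 2 :: 'k)"
proof (cases n)
  case 0 then show ?thesis by simp
next
  case (Suc k)
  have "2 * (Suc k choose 2) = Suc k * k" by (simp add: choose_two)
  then have "(2::'k) * of_nat (Suc k choose 2) = of_nat (Suc k) * of_nat k"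
    by (metis of_nat_mult of_nat_numeral)
  then show ?thesis using Suc by (simp add: field_simps)
qed

lemma jordan: "Om (M X X) = M X (Om X) + M X (Om X) - M (M X X) w"
proof -
  define a :: 'k where "a = of_nat m"
  have a0: "a \<noteq> 0" using m1 by (simp add: a_def)
  define z where "z = Psi (M X X)"
  define u where "u = M g (M (M X X) w)"
  define v where "v = M g (Om (M X X))"
  define q where "q = M g (M X (Om X))"
  have A: "sT (a+1) z = u + sT a v" using E1[of "M X X"] by (simp add: a_def z_def u_def v_def add.commute)
  have B: "sT ((a+1)*a/2) z = sT a q + sT (a*(a-1)/2) v"
    using E2[of X] by (simp add: a_def z_def v_def q_def ch2 add.commute)
  have "sT (2/a) (sT ((a+1)*a/2) z) = sT (2/a) (sT a q + sT (a*(a-1)/2) v)" using B by simp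
  moreover have s1: "2/a * ((a+1)*a/2) = a+1" and s2: "2/a*a = 2" and s3: "2/a*(a*(a-1)/2) = a-1"
    using a0 by (simp_all add: field_simps)
  ultimately have "sT (a+1) z = sT 2 q + sT (a-1) v"
    by (simp only: T_scale_right_distrib T_scale_scale s1 s2 s3)
  with A have "u + sT a v = sT 2 q + sT (a-1) v" by simp
  then have "u + sT (a - 1) v + v = sT 2 q + sT (a-1) v"
    using T_scale_left_distrib[of "a-1" 1 v] by simp
  then have "v = sT 2 q - u" by (simp add: algebra_simps)
  also have "sT 2 q = q + q" using T_scale_left_distrib[of 1 1 q] by simp
  finally have "M g (Om (M X X) - (M X (Om X) + M X (Om X) - M (M X X) w)) = 0"
    by (simp add: v_def q_def u_def M_diffR M_distR)
  then show ?thesis using gcancel[of "Om (M X X) - (M X (Om X) + M X (Om X) - M (M X X) w)"] by simp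
qed

definition D where "D X = Om X - M w X"

lemma Dadd: "D (X + Y) = D X + D Y"
  by (simp add: D_def addF[OF aOm] M_distR)
lemma D0[simp]: "D 0 = 0" using Dadd[of 0 0] by simp
lemma Ddiff: "D (X - Y) = D X - D Y"
  by (simp add: D_def addF_diff[OF aOm] M_diffR)
lemma Done: "D tone = 0" by (simp add: D_def)

lemma DJ: "D (M X X) = M X (D X) + M X (D X)"
proof -
  have "M X (M w X) = M w (M X X)" by (metis M_assoc wcomm)
  moreover have "M (M X X) w = M w (M X X)" by (rule wcomm[symmetric])
  ultimately show ?thesis by (simp add: D_def jordan M_diffR diff_add_eq diff_diff_eq add.assoc)
qed

lemma DC: "M X (D X) = M (D X) X"
proof -
  have "M X (M w X) = M (M w X) X" by (metis M_assoc wcomm)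
  then show ?thesis by (simp add: D_def M_diffR M_diffL comm)
qed

lemma Lin1: "D (M X Y + M Y X) = (M X (D Y) + M Y (D X)) + (M X (D Y) + M Y (D X))"
proof -
  have "D (M (X+Y) (X+Y)) = M (X+Y) (D (X+Y)) + M (X+Y) (D (X+Y))" by (rule DJ)
  then show ?thesis using DJ[of X] DJ[of Y] Dadd[of "M X Y" "M Y X"] by (simp add: Dadd M_distL M_distR add.assoc add.left_commute)
qed

lemma Lin2: "M X (D Y) + M Y (D X) = M (D X) Y + M (D Y) X"
proof -
  have "M (X+Y) (D (X+Y)) = M (D (X+Y)) (X+Y)" by (rule DC)
  then show ?thesis using DC[of X] DC[of Y] by (simp add: Dadd M_distL M_distR add.assoc add.left_commute)
qed

lemma Lin3: "D (M X Y + M Y X) = (M (D X) Y + M (D Y) X) + (M (D X) Y + M (D Y) X)"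
  using Lin1[of X Y] Lin2[of X Y] by simp

lemma DP: "D (1,0,0) = 0"
proof -
  obtain x y z where e: "D (1,0,0) = (x,y,z)" by (cases "D (1,0,0)") auto
  have "D (M (1,0,0) (1,0,0)) = M (1,0,0) (D (1,0,0)) + M (1,0,0) (D (1,0,0))" by (rule DJ)
  then have "(x,y,z) = (x+x,y+y,0)" using e by (simp add: lA_one)
  then show ?thesis using e by (simp add: zero_prod_def)
qed

lemma DQ: "D (0,0,1) = 0"
proof -
  have "(0,0,1) = tone - (1,0,0)" by (simp add: tone_def)
  then have "D (0,0,1) = D (tone - (1,0,0))" by (rule arg_cong)
  then have "D (0,0,1) = D tone - D (1,0,0)" using Ddiff by simp
  then show ?thesis using Done DP by simp
qed

lemma DMm: "D (0,mm,0) = 0"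
proof -
  obtain x y z where e: "D (0,mm,0) = (x,y,z)" by (cases "D (0,mm,0)") auto
  have "D (M (1,0,0) (0,mm,0) + M (0,mm,0) (1,0,0)) = (M (1,0,0) (D (0,mm,0)) + M (0,mm,0) (D (1,0,0))) + (M (1,0,0) (D (0,mm,0)) + M (0,mm,0) (D (1,0,0)))" by (rule Lin1)
  then have "(x,y,z) = (x+x,y+y,0)" using e DP by (simp add: lA_one)
  then show ?thesis using e by (simp add: zero_prod_def)
qed

lemma tfA: "(x::'a) + x = 0 \<Longrightarrow> x = 0"
  using tf2[of "(x,0,0)"] by (simp add: zero_prod_def)
lemma tfMM: "(x::'m) + x = 0 \<Longrightarrow> x = 0"
  using tf2[of "(0,x,0)"] by (simp add: zero_prod_def)
lemma tfB: "(x::'b) + x = 0 \<Longrightarrow> x = 0"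
  using tf2[of "(0,0,x)"] by (simp add: zero_prod_def)

lemma D000: "D (0,0,0) = (0,0,0)" using D0 by (simp add: zero_prod_def)

lemma DAm: "D (a,0,0) = 0"
proof -
  obtain x y z where e: "D (a,0,0) = (x,y,z)" by (cases "D (a,0,0)") auto
  have "D (M (1,0,0) (a,0,0) + M (a,0,0) (1,0,0)) = (M (1,0,0) (D (a,0,0)) + M (a,0,0) (D (1,0,0))) + (M (1,0,0) (D (a,0,0)) + M (a,0,0) (D (1,0,0)))" by (rule Lin1)
  then have R: "D (a+a,0,0) = (x+x,y+y,0)" using e DP by (simp add: lA_one)
  have L: "D (a+a,0,0) = (x+x,y+y,z+z)" using Dadd[of "(a,0,0)" "(a,0,0)"] e by simp
  from L R have z: "z = 0" using tfB[of z] by simp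
  have "D (M (a,0,0) (0,0,1) + M (0,0,1) (a,0,0)) = (M (D (a,0,0)) (0,0,1) + M (D (0,0,1)) (a,0,0)) + (M (D (a,0,0)) (0,0,1) + M (D (0,0,1)) (a,0,0))" by (rule Lin3)
  then have "(0,y+y,0) = (0,0,0)" using e DQ z D000 by (simp add: rB_one zero_prod_def)
  then have y: "y = 0" using tfMM[of y] by simp
  have "lA x mm = 0" for mm
  proof -
    have "D (M (a,0,0) (0,mm,0) + M (0,mm,0) (a,0,0)) = (M (D (a,0,0)) (0,mm,0) + M (D (0,mm,0)) (a,0,0)) + (M (D (a,0,0)) (0,mm,0) + M (D (0,mm,0)) (a,0,0))" by (rule Lin3)
    then have "(0, lA x mm + lA x mm, 0) = (0,0,0)" using e DMm[of mm] DMm[of "lA a mm"] y z by (simp add: zero_prod_def)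
    then show ?thesis using tfMM[of "lA x mm"] by simp
  qed
  then have "x = 0" using fl by (simp add: faithful_left_def)
  then show ?thesis using e y z by (simp add: zero_prod_def)
qed

lemma DBm: "D (0,0,b) = 0"
proof -
  obtain x y z where e: "D (0,0,b) = (x,y,z)" by (cases "D (0,0,b)") auto
  have "D (M (0,0,1) (0,0,b) + M (0,0,b) (0,0,1)) = (M (0,0,1) (D (0,0,b)) + M (0,0,b) (D (0,0,1))) + (M (0,0,1) (D (0,0,b)) + M (0,0,b) (D (0,0,1)))" by (rule Lin1)
  then have R: "D (0,0,b+b) = (0,0,z+z)" using e DQ by simp
  have L: "D (0,0,b+b) = (x+x,y+y,z+z)" using Dadd[of "(0,0,b)" "(0,0,b)"] e by simp
  from L R have x: "x = 0" and y: "y = 0" using tfA[of x] tfMM[of y] by auto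
  have "rB mm z = 0" for mm
  proof -
    have "D (M (0,mm,0) (0,0,b) + M (0,0,b) (0,mm,0)) = (M (0,mm,0) (D (0,0,b)) + M (0,0,b) (D (0,mm,0))) + (M (0,mm,0) (D (0,0,b)) + M (0,0,b) (D (0,mm,0)))" by (rule Lin1)
    then have "(0, rB mm z + rB mm z, 0) = (0,0,0)" using e DMm[of mm] DMm[of "rB mm b"] x y by (simp add: zero_prod_def)
    then show ?thesis using tfMM[of "rB mm z"] by simp
  qed
  then have "z = 0" using fr by (simp add: faithful_right_def)
  then show ?thesis using e x y by (simp add: zero_prod_def)
qed

lemma Dzero: "D X = 0"
proof -
  obtain a mm b where X: "X = (a,mm,b)" by (cases X) auto
  have "D X = D ((a,0,0) + (0,mm,0) + (0,0,b))" using X by simp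
  also have "\<dots> = D (a,0,0) + D (0,mm,0) + D (0,0,b)" unfolding Dadd by (rule refl)
  finally have "D X = D (a,0,0) + D (0,mm,0) + D (0,0,b)" .
  then show ?thesis using DAm DMm DBm by simp
qed

lemma OmX: "Om X = M w X" using Dzero[of X] by (simp add: D_def)

lemma PsiX: "Psi X = M g (Om X)"
proof -
  have "sT (of_nat (Suc m)) (Psi X) = M g (M w X) + sT (of_nat m) (M g (M w X))"
    using E1[of X] wcomm[of X] OmX[of X] by simp
  also have "\<dots> = sT (of_nat (Suc m)) (M g (M w X))"
    using T_scale_left_distrib[of 1 "of_nat m" "M g (M w X)"] by (simp add: add.commute)
  finally have "sT (of_nat (Suc m)) (Psi X - M g (M w X)) = 0" by (simp add: T_scale_right_diff_distrib)
  then have "Psi X - M g (M w X) = 0" using tf by blast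
  then show ?thesis using OmX[of X] by simp
qed

lemma final: "two_sided_centralizer lA rB Psi \<and> two_sided_centralizer lA rB Om \<and> (\<forall>X. Psi X = M g (Om X))"
proof -
  have wc: "M w (M X Y) = M X (M w Y)" for X Y
  proof -
    have "M w (M X Y) = M (M w X) Y" by (simp add: M_assoc)
    also have "\<dots> = M (M X w) Y" using wcomm[of X] by simp
    finally show ?thesis by (simp add: M_assoc)
  qed
  have gc': "M g (M X Y) = M X (M g Y)" for X Y
  proof -
    have "M g (M X Y) = M (M g X) Y" by (simp add: M_assoc)
    also have "\<dots> = M (M X g) Y" using gcomm[of X] by simp
    finally show ?thesis by (simp add: M_assoc)
  qed
  have 1: "two_sided_centralizer lA rB Om"
    unfolding two_sided_centralizer_def
  proof (intro conjI allI aOm)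
    fix X Y
    show "Om (M X Y) = M (Om X) Y" by (simp only: OmX[of "M X Y"] OmX[of X] M_assoc)
    show "Om (M X Y) = M X (Om Y)" by (simp only: OmX[of "M X Y"] OmX[of Y] wc)
  qed
  have 2: "two_sided_centralizer lA rB Psi"
    unfolding two_sided_centralizer_def
  proof (intro conjI allI aPsi)
    fix X Y
    show "Psi (M X Y) = M (Psi X) Y" by (simp only: PsiX OmX[of "M X Y"] OmX[of X] M_assoc)
    have "Psi (M X Y) = M g (M X (M w Y))" by (simp only: PsiX OmX[of "M X Y"] wc)
    also have "\<dots> = M X (M g (M w Y))" by (rule gc')
    finally show "Psi (M X Y) = M X (Psi Y)" by (simp only: PsiX[of Y] OmX[of Y])
  qed
  show ?thesis using 1 2 PsiX by blast
qed

end

theorem corollary2p2: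
  fixes sA :: "'k::field_char_0 \<Rightarrow> 'a::ring_1 \<Rightarrow> 'a"
    and sB :: "'k \<Rightarrow> 'b::ring_1 \<Rightarrow> 'b"
    and sM :: "'k \<Rightarrow> 'm::ab_group_add \<Rightarrow> 'm"
    and lA :: "'a \<Rightarrow> 'm \<Rightarrow> 'm"
    and rB :: "'m \<Rightarrow> 'b \<Rightarrow> 'm"
    and n :: nat
    and \<gamma> :: "('a,'m,'b) tri"
    and \<Psi> \<Omega> :: "('a,'m,'b) tri \<Rightarrow> ('a,'m,'b) tri"
  assumes "unital_algebra sA" and "unital_algebra sB"
    and "bimodule sA sB sM lA rB"
    and "faithful_left lA" and "faithful_right rB"
    and "n > 1"
    and "\<gamma> \<in> tcenter lA rB"
    and "\<exists>\<delta>. tmul lA rB \<gamma> \<delta> = tone \<and> tmul lA rB \<delta> \<gamma> = tone"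
    and "tadditive \<Psi>" and "tadditive \<Omega>"
    and "\<And>X. \<Psi> (tpow lA rB X n) = tmul lA rB \<gamma> (tmul lA rB X (\<Omega> (tpow lA rB X (n - 1))))"
    and "\<And>X. \<Psi> (tpow lA rB X n) = tmul lA rB \<gamma> (tmul lA rB (\<Omega> (tpow lA rB X (n - 1))) X)"
    and "\<Omega> tone \<in> tcenter lA rB"
  shows "two_sided_centralizer lA rB \<Psi> \<and> two_sided_centralizer lA rB \<Omega>
         \<and> (\<forall>X. \<Psi> X = tmul lA rB \<gamma> (\<Omega> X))"
proof -
  have nS: "n = Suc (n - 1)" using assms(6) by simp
  interpret mainset sA sB sM lA rB "n - 1" \<gamma> \<Psi> \<Omega>
  proof (unfold_locales)
    show "1 \<le> n - 1" using assms(6) by simp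
    fix X
    show "\<Psi> (tpow lA rB X (Suc (n - 1))) = tmul lA rB \<gamma> (tmul lA rB X (\<Omega> (tpow lA rB X (n - 1))))"
      using assms(11)[of X] nS by simp
    show "\<Psi> (tpow lA rB X (Suc (n - 1))) = tmul lA rB \<gamma> (tmul lA rB (\<Omega> (tpow lA rB X (n - 1))) X)"
      using assms(12)[of X] nS by simp
  qed (use assms in auto)
  show ?thesis by (rule final)
qed

end
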